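(* Let $x,y>0$ and $r,s\in\mathbb{R}$, and let $F_{r,s;x,y}(w)=E(r+w,s+w;x,y)$ for $w\in\mathbb{R}$. If $s+r>0$, then the function $w\mapsto w\ln F_{r,s;x,y}(w)$ is convex on $\bigl(-\frac{s+r}{2},0\bigr)$. If $s+r<0$, then $w\mapsto w\ln F_{r,s;x,y}(w)$ is convex on $\bigl(0,-\frac{s+r}{2}\bigr)$.
   Context: For $x,y>0$ and $r,s\in\mathbb{R}$ the extended mean values are defined by $E(r,s;x,y)=\bigl(\frac{r}{s}\cdot\frac{y^s-x^s}{y^r-x^r}\bigr)^{1/(s-r)}$ if $rs(r-s)(x-y)\neq0$; $E(r,0;x,y)=E(0,r;x,y)=\bigl(\frac1r\cdot\frac{y^r-x^r}{\ln y-\ln x}\bigr)^{1/r}$ if $r(x-y)\neq0$; $E(r,r;x,y)=e^{-1/r}\bigl(\frac{x^{x^r}}{y^{y^r}}\bigr)^{1/(x^r-y^r)}$ if $r(x-y)\neq0$; $E(0,0;x,y)=\sqrt{xy}$ if $x\neq y$; $E(r,s;x,x)=x$. *)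

theory Defs
  imports "HOL-Analysis.Analysis"
begin

definition ext_mean :: "real \<Rightarrow> real \<Rightarrow> real \<Rightarrow> real \<Rightarrow> real" where
  "ext_mean r s x y =
    (if x = y then x
     else if r \<noteq> 0 \<and> s \<noteq> 0 \<and> r \<noteq> s then
       ((r / s) * ((y powr s - x powr s) / (y powr r - x powr r))) powr (1 / (s - r))
     else if r \<noteq> 0 \<and> s = 0 then
       ((1 / r) * ((y powr r - x powr r) / (ln y - ln x))) powr (1 / r)
     else if r = 0 \<and> s \<noteq> 0 then
       ((1 / s) * ((y powr s - x powr s) / (ln y - ln x))) powr (1 / s)
     else if r = s \<and> r \<noteq> 0 then
       exp (- 1 / r) * ((x powr (x powr r)) / (y powr (y powr r))) powr (1 / (x powr r - y powr r))
     else sqrt (x * y))"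

end

theory Submission
  imports Defs "HOL-Real_Asymp.Real_Asymp"
begin


definition g :: "real \<Rightarrow> real" where "g u = (if u = 0 then 0 else ln (sinh u / u))"
definition g1 :: "real \<Rightarrow> real" where "g1 u = (if u = 0 then 0 else cosh u / sinh u - 1 / u)"
definition g2 :: "real \<Rightarrow> real" where "g2 u = (if u = 0 then 1/3 else 1 / u^2 - 1 / (sinh u)^2)"

lemma sinh_div_pos: "u \<noteq> 0 \<Longrightarrow> sinh u / (u::real) > 0"
  by (cases "u > 0") (auto simp: divide_pos_pos divide_neg_neg)

lemma g_deriv: "(g has_real_derivative g1 u) (at u)"
proof (cases "u = 0")
  case True
  have "((\<lambda>y::real. ln (sinh y / y) / y) \<longlongrightarrow> 0) (at 0)" by real_asymp
  then have "((\<lambda>y. (g y - g 0) / (y - 0)) \<longlongrightarrow> 0) (at 0)"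
    by (rule Lim_transform_eventually) (auto simp: g_def eventually_at_filter)
  then show ?thesis using True by (simp add: has_field_derivative_iff g1_def)
next
  case False
  have pos: "sinh u / u > 0" using sinh_div_pos[OF False] .
  have "((\<lambda>v. ln (sinh v / v)) has_real_derivative
      ((cosh u * u - sinh u * 1) / (u * u)) / (sinh u / u)) (at u)"
    using pos False by (auto intro!: derivative_eq_intros)
  moreover have "((cosh u * u - sinh u * 1) / (u * u)) / (sinh u / u) = g1 u"
    using False pos by (auto simp: g1_def field_simps)
  ultimately have "((\<lambda>v. ln (sinh v / v)) has_real_derivative g1 u) (at u)" by simp
  then show ?thesis
    by (rule has_field_derivative_transform_within_open[where S="-{0}"])
       (use False in \<open>auto simp: g_def\<close>)
qed

lemma g1_deriv: "(g1 has_real_derivative g2 u) (at u)"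
proof (cases "u = 0")
  case True
  have "((\<lambda>y::real. (cosh y / sinh y - 1/y) / y) \<longlongrightarrow> 1/3) (at 0)" by real_asymp
  then have "((\<lambda>y. (g1 y - g1 0) / (y - 0)) \<longlongrightarrow> 1/3) (at 0)"
    by (rule Lim_transform_eventually) (auto simp: g1_def eventually_at_filter)
  then show ?thesis using True by (simp add: has_field_derivative_iff g2_def)
next
  case False
  have s: "sinh u \<noteq> 0" using False by simp
  have "((\<lambda>v. cosh v / sinh v - 1 / v) has_real_derivative
      (sinh u * sinh u - cosh u * cosh u) / (sinh u * sinh u) - (- (1 / (u*u)))) (at u)"
    using s False by (auto intro!: derivative_eq_intros simp: power2_eq_square)
  moreover have "(sinh u * sinh u - cosh u * cosh u) / (sinh u * sinh u) - (- (1 / (u*u))) = g2 u"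
  proof -
    have c: "cosh u * cosh u = sinh u * sinh u + 1" using cosh_square_eq[of u] by (simp add: power2_eq_square)
    show ?thesis using False s by (auto simp: g2_def field_simps power2_eq_square c)
  qed
  ultimately have "((\<lambda>v. cosh v / sinh v - 1 / v) has_real_derivative g2 u) (at u)" by simp
  then show ?thesis
    by (rule has_field_derivative_transform_within_open[where S="-{0}"])
       (use False in \<open>auto simp: g1_def\<close>)
qed

lemma mono0:
  fixes f f' :: "real \<Rightarrow> real"
  assumes "\<And>t. (f has_real_derivative f' t) (at t)" "\<And>t. t > 0 \<Longrightarrow> f' t \<ge> 0" "f 0 = 0" "v \<ge> 0"
  shows "f v \<ge> 0"
proof -
  have "f 0 \<le> f v"
  proof (rule DERIV_nonneg_imp_increasing_open[OF \<open>v \<ge> 0\<close>])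
    show "continuous_on {0..v} f"
      by (meson DERIV_isCont assms(1) continuous_at_imp_continuous_on)
  qed (use assms in auto)
  with assms show ?thesis by simp
qed

lemma c2_nonneg: "v \<ge> 0 \<Longrightarrow> v * cosh v - sinh v \<ge> (0::real)"
proof -
  have d: "\<And>t. ((\<lambda>v. v * cosh v - sinh v) has_real_derivative t * sinh t) (at t)"
    by (auto intro!: derivative_eq_intros)
  show "v \<ge> 0 \<Longrightarrow> ?thesis" by (rule mono0[OF d]) auto
qed

lemma c1_nonneg: "v \<ge> 0 \<Longrightarrow> v * sinh v - 2 * cosh v + 2 \<ge> (0::real)"
proof -
  have d: "\<And>t. ((\<lambda>v. v * sinh v - 2 * cosh v + 2) has_real_derivative t * cosh t - sinh t) (at t)"
    by (auto intro!: derivative_eq_intros)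
  show "v \<ge> 0 \<Longrightarrow> ?thesis" by (rule mono0[OF d]) (use c2_nonneg in force)+
qed

lemma chi_nonneg: "v \<ge> 0 \<Longrightarrow> v * (cosh v + 2) - 3 * sinh v \<ge> (0::real)"
proof -
  have d: "\<And>t. ((\<lambda>v. v * (cosh v + 2) - 3 * sinh v) has_real_derivative t * sinh t - 2 * cosh t + 2) (at t)"
    by (auto intro!: derivative_eq_intros simp: algebra_simps)
  show "v \<ge> 0 \<Longrightarrow> ?thesis" by (rule mono0[OF d]) (auto simp: c1_nonneg)
qed

lemma psi_deriv_nonneg:
  assumes "u > 0" shows "g1 u - sinh u / cosh u / 3 \<ge> 0"
proof -
  have "(2*u) * (cosh (2*u) + 2) - 3 * sinh (2*u) \<ge> 0" using chi_nonneg[of "2*u"] assms by simp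
  then have A: "3*u*(cosh u)^2 - 3 * sinh u * cosh u - u * (sinh u)^2 \<ge> 0"
    unfolding cosh_double sinh_double using cosh_square_eq[of u] by (simp add: algebra_simps)
  have sp: "sinh u > 0" "cosh u > 0" using assms by auto
  have "g1 u - sinh u / cosh u / 3 = (3*u*(cosh u)^2 - 3 * sinh u * cosh u - u * (sinh u)^2) / (3 * u * sinh u * cosh u)"
    using assms sp by (simp add: g1_def field_simps power2_eq_square)
  also have "\<dots> \<ge> 0" using A sp assms by (intro divide_nonneg_pos) auto
  finally show ?thesis .
qed

lemma key_ineq:
  fixes u :: real
  assumes "u > 0" shows "cosh u \<le> (sinh u / u)^3"
proof -
  have d: "\<And>t. ((\<lambda>z. g z - ln (cosh z) / 3) has_real_derivative g1 t - sinh t / cosh t / 3) (at t)"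
    by (auto intro!: derivative_eq_intros g_deriv)
  have "g u - ln (cosh u) / 3 \<ge> 0"
    by (rule mono0[OF d]) (use assms psi_deriv_nonneg in \<open>auto simp: g_def\<close>)
  then have "ln (cosh u) \<le> 3 * ln (sinh u / u)" using assms by (simp add: g_def)
  also have "\<dots> = ln ((sinh u / u)^3)" using assms by (simp add: ln_realpow)
  finally show ?thesis using assms by (subst (asm) ln_le_cancel_iff) auto
qed

lemma g2_cont: "isCont g2 u"
proof (cases "u = 0")
  case True
  have "((\<lambda>y::real. 1/y^2 - 1/ (sinh y)^2) \<longlongrightarrow> 1/3) (at 0)" by real_asymp
  then have "(g2 \<longlongrightarrow> 1/3) (at 0)"
    by (rule Lim_transform_eventually) (auto simp: g2_def eventually_at_filter)
  then have "(g2 \<longlongrightarrow> g2 0) (at 0)" by (simp add: g2_def)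
  then show ?thesis using True by (simp add: isCont_def)
next
  case False
  have "((\<lambda>v. 1 / v^2 - 1 / (sinh v)^2) has_real_derivative
      (- (2 * u) / (u^2)^2 + 2 * sinh u * cosh u / ((sinh u)^2)^2)) (at u)"
    using False by (auto intro!: derivative_eq_intros simp: power2_eq_square)
  then have "(g2 has_real_derivative (- (2 * u) / (u^2)^2 + 2 * sinh u * cosh u / ((sinh u)^2)^2)) (at u)"
    by (rule has_field_derivative_transform_within_open[where S="-{0}"])
       (use False in \<open>auto simp: g2_def\<close>)
  then show ?thesis by (rule DERIV_isCont)
qed

lemma g2_even: "g2 (-u) = g2 u" by (simp add: g2_def)

lemma g2_antitone:
  assumes "0 \<le> u" "u \<le> v" shows "g2 v \<le> g2 u"
proof (rule DERIV_nonpos_imp_decreasing_open[OF assms(2)])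
  show "continuous_on {u..v} g2" by (simp add: continuous_at_imp_continuous_on g2_cont)
next
  fix t assume t: "u < t" "t < v"
  then have tp: "t > 0" using assms by simp
  have "((\<lambda>v. 1 / v^2 - 1 / (sinh v)^2) has_real_derivative
      (- (2 * t) / (t^2)^2 + 2 * sinh t * cosh t / ((sinh t)^2)^2)) (at t)"
    using tp by (auto intro!: derivative_eq_intros simp: power2_eq_square)
  then have d: "(g2 has_real_derivative (- (2 * t) / (t^2)^2 + 2 * sinh t * cosh t / ((sinh t)^2)^2)) (at t)"
    by (rule has_field_derivative_transform_within_open[where S="{0<..}"])
       (use tp in \<open>auto simp: g2_def\<close>)
  have st: "sinh t > 0" using tp by simp
  have "cosh t * t^3 \<le> (sinh t)^3" using key_ineq[OF tp] tp by (simp add: field_simps)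
  then have "- (2 * t) / (t^2)^2 + 2 * sinh t * cosh t / ((sinh t)^2)^2 \<le> 0"
    using tp st by (simp add: field_simps power2_eq_square power3_eq_cube power4_eq_xxxx)
  with d show "\<exists>y. DERIV g2 t :> y \<and> y \<le> 0" by blast
qed

lemma sinh_ge: "u \<ge> 0 \<Longrightarrow> sinh u \<ge> (u::real)"
proof -
  have d: "\<And>t. ((\<lambda>v. sinh v - v) has_real_derivative cosh t - 1) (at t)"
    by (auto intro!: derivative_eq_intros)
  show "u \<ge> 0 \<Longrightarrow> ?thesis" using mono0[OF d, of u] cosh_real_ge_1 by auto
qed

lemma g2_nonneg: "g2 u \<ge> 0"
proof -
  have "g2 \<bar>u\<bar> \<ge> 0"
  proof (cases "u = 0")
    case False
    then have a: "\<bar>u\<bar> > 0" by simp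
    have "\<bar>u\<bar>^2 \<le> (sinh \<bar>u\<bar>)^2" using sinh_ge[of "\<bar>u\<bar>"] a by (intro power_mono) auto
    then show ?thesis using a by (simp add: g2_def divide_simps)
  qed (simp add: g2_def)
  moreover have "g2 \<bar>u\<bar> = g2 u" by (cases "u \<ge> 0") (auto simp: g2_even)
  ultimately show ?thesis by simp
qed



definition Phi :: "(real \<Rightarrow> real) \<Rightarrow> (real \<Rightarrow> real) \<Rightarrow> real \<Rightarrow> real \<Rightarrow> real \<Rightarrow> real" where
  "Phi S S1 r s w = (if r = s then S1 (r + w) else (S (s + w) - S (r + w)) / (s - r))"

lemma convex_from_f2:
  fixes f f1 f2 :: "real \<Rightarrow> real"
  assumes d1: "\<And>w. (f has_real_derivative f1 w) (at w)"
    and d2: "\<And>w. (f1 has_real_derivative f2 w) (at w)"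
    and nn: "\<And>w. a < w \<Longrightarrow> w < b \<Longrightarrow> f2 w \<ge> 0"
  shows "convex_on {a<..<b} f"
proof (rule convex_on_realI[where f'=f1])
  show "connected {a<..<b}" by simp
  show "\<And>x. x \<in> {a<..<b} \<Longrightarrow> (f has_real_derivative f1 x) (at x)" using d1 by blast
  fix x y assume xy: "x \<in> {a<..<b}" "y \<in> {a<..<b}" "x \<le> y"
  show "f1 x \<le> f1 y"
  proof (rule DERIV_nonneg_imp_increasing_open[OF xy(3)])
    show "continuous_on {x..y} f1"
      by (meson DERIV_isCont d2 continuous_at_imp_continuous_on)
    fix t assume "x < t" "t < y"
    then show "\<exists>z. (f1 has_real_derivative z) (at t) \<and> 0 \<le> z"
      using xy d2 nn by (intro exI[of _ "f2 t"]) auto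
  qed
qed

context
  fixes S S1 S2 :: "real \<Rightarrow> real"
  assumes d1: "\<And>t. (S has_real_derivative S1 t) (at t)"
    and d2: "\<And>t. (S1 has_real_derivative S2 t) (at t)"
    and ev: "\<And>t. S2 (-t) = S2 t"
    and nn: "\<And>t. S2 t \<ge> 0"
    and anti: "\<And>u v. 0 \<le> u \<Longrightarrow> u \<le> v \<Longrightarrow> S2 v \<le> S2 u"
begin

lemma S1_mono: "u \<le> v \<Longrightarrow> S1 u \<le> S1 v"
  by (rule DERIV_nonneg_imp_increasing_open)
     (use d2 nn in \<open>auto intro: continuous_at_imp_continuous_on DERIV_isCont\<close>)

lemma S2_pos_side: "p < q \<Longrightarrow> p + q > 0 \<Longrightarrow> S2 q \<le> S2 p"
proof (cases "p \<ge> 0")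
  case True
  assume "p < q" then show ?thesis using anti[OF True] by simp
next
  case False
  assume "p < q" "p + q > 0"
  then have "S2 q \<le> S2 (-p)" using False by (intro anti) auto
  then show ?thesis using ev by simp
qed

lemma S2_neg_side: "p < q \<Longrightarrow> p + q < 0 \<Longrightarrow> S2 p \<le> S2 q"
  using S2_pos_side[of "-q" "-p"] ev by simp

lemma quot_nonneg: "(S1 q - S1 p) / (q - p) \<ge> 0"
proof (cases "p \<le> q")
  case True then show ?thesis using S1_mono[OF True] by (simp add: divide_nonneg_nonneg)
next
  case False then show ?thesis using S1_mono[of q p] by (simp add: divide_nonpos_neg)
qed

lemma quot2_pos: "p + q > 0 \<Longrightarrow> (S2 q - S2 p) / (q - p) \<le> 0"
proof (cases p q rule: linorder_cases)
  case less assume "p + q > 0" then show ?thesis using S2_pos_side[OF less] less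
    by (simp add: divide_nonpos_pos)
next
  case greater assume "p + q > 0" then show ?thesis using S2_pos_side[OF greater] greater
    by (simp add: divide_nonneg_neg)
qed simp

lemma quot2_neg: "p + q < 0 \<Longrightarrow> (S2 q - S2 p) / (q - p) \<ge> 0"
proof (cases p q rule: linorder_cases)
  case less assume "p + q < 0" then show ?thesis using S2_neg_side[OF less] less
    by (simp add: divide_nonneg_pos)
next
  case greater assume "p + q < 0" then show ?thesis using S2_neg_side[OF greater] greater
    by (simp add: divide_nonpos_neg)
qed simp

lemma main_neq:
  assumes "r \<noteq> s" and "a < b"
    and sgn: "\<And>w. a < w \<Longrightarrow> w < b \<Longrightarrow> w * ((S2 (s+w) - S2 (r+w)) / ((s+w) - (r+w))) \<ge> 0"
  shows "convex_on {a<..<b} (\<lambda>w. w * Phi S S1 r s w)"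
proof -
  define k where "k = 1 / (s - r)"
  have e: "(\<lambda>w. w * Phi S S1 r s w) = (\<lambda>w. w * (S (s + w) - S (r + w)) * k)"
    using assms by (simp add: Phi_def k_def)
  show ?thesis unfolding e
  proof (rule convex_from_f2)
    show "((\<lambda>w. w * (S (s + w) - S (r + w)) * k) has_real_derivative
       ((S (s + w) - S (r + w)) + w * (S1 (s + w) - S1 (r + w))) * k) (at w)" for w
      by (auto intro!: derivative_eq_intros DERIV_chain2[OF d1] simp: algebra_simps)
    show "((\<lambda>w. ((S (s + w) - S (r + w)) + w * (S1 (s + w) - S1 (r + w))) * k) has_real_derivative
       (2 * (S1 (s + w) - S1 (r + w)) + w * (S2 (s + w) - S2 (r + w))) * k) (at w)" for w
      by (auto intro!: derivative_eq_intros DERIV_chain2[OF d1] DERIV_chain2[OF d2] simp: algebra_simps)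
    fix w assume w: "a < w" "w < b"
    have eq: "(s+w) - (r+w) = s - r" by simp
    have "0 \<le> 2 * ((S1 (s + w) - S1 (r + w)) / (s - r)) + w * ((S2 (s + w) - S2 (r + w)) / (s - r))"
      using quot_nonneg[of "s+w" "r+w"] sgn[OF w] unfolding eq by linarith
    moreover have "(2 * (S1 (s + w) - S1 (r + w)) + w * (S2 (s + w) - S2 (r + w))) * k
       = 2 * ((S1 (s + w) - S1 (r + w)) / (s - r)) + w * ((S2 (s + w) - S2 (r + w)) / (s - r))"
      by (simp add: k_def divide_inverse algebra_simps)
    ultimately show "0 \<le> (2 * (S1 (s + w) - S1 (r + w)) + w * (S2 (s + w) - S2 (r + w))) * k"
      by simp
  qed
qed

lemma deriv_eq: "((\<lambda>w. w * Phi S S1 r r w) has_real_derivative S1 (r + w) + w * S2 (r + w)) (at w)"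
  unfolding Phi_def by (auto intro!: derivative_eq_intros DERIV_chain2[OF d2])

lemma main_eq_pos:
  assumes "r > 0" shows "convex_on {-r<..<0} (\<lambda>w. w * Phi S S1 r r w)"
proof (rule convex_on_realI[where f'="\<lambda>w. S1 (r + w) + w * S2 (r + w)"])
  show "connected {-r<..<0}" by simp
  show "((\<lambda>w. w * Phi S S1 r r w) has_real_derivative S1 (r + x) + x * S2 (r + x)) (at x)" for x
    by (rule deriv_eq)
  fix x y assume xy: "x \<in> {-r<..<0}" "y \<in> {-r<..<0}" "x \<le> y"
  have a: "S1 (r + x) \<le> S1 (r + y)" using xy by (intro S1_mono) simp
  have b: "S2 (r + y) \<le> S2 (r + x)" using xy by (intro anti) auto
  have c: "x * S2 (r + x) \<le> x * S2 (r + y)" using b xy by (intro mult_left_mono_neg) auto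
  have d: "x * S2 (r + y) \<le> y * S2 (r + y)" using nn xy by (intro mult_right_mono) auto
  show "S1 (r + x) + x * S2 (r + x) \<le> S1 (r + y) + y * S2 (r + y)" using a c d by linarith
qed

lemma main_eq_neg:
  assumes "r < 0" shows "convex_on {0<..<-r} (\<lambda>w. w * Phi S S1 r r w)"
proof (rule convex_on_realI[where f'="\<lambda>w. S1 (r + w) + w * S2 (r + w)"])
  show "connected {0<..<-r}" by simp
  show "((\<lambda>w. w * Phi S S1 r r w) has_real_derivative S1 (r + x) + x * S2 (r + x)) (at x)" for x
    by (rule deriv_eq)
  fix x y assume xy: "x \<in> {0<..<-r}" "y \<in> {0<..<-r}" "x \<le> y"
  have a: "S1 (r + x) \<le> S1 (r + y)" using xy by (intro S1_mono) simp
  have b: "S2 (r + x) \<le> S2 (r + y)"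
  proof -
    have "S2 (-(r + x)) \<le> S2 (-(r + y))" using xy by (intro anti) auto
    then show ?thesis by (simp only: ev)
  qed
  have c: "x * S2 (r + x) \<le> y * S2 (r + x)" using nn xy by (intro mult_right_mono) auto
  have d: "y * S2 (r + x) \<le> y * S2 (r + y)" using b xy by (intro mult_left_mono) auto
  show "S1 (r + x) + x * S2 (r + x) \<le> S1 (r + y) + y * S2 (r + y)" using a c d by linarith
qed

lemma main:
  "(s + r > 0 \<longrightarrow> convex_on {- (s + r) / 2 <..< 0} (\<lambda>w. w * Phi S S1 r s w))
 \<and> (s + r < 0 \<longrightarrow> convex_on {0 <..< - (s + r) / 2} (\<lambda>w. w * Phi S S1 r s w))"
proof (cases "r = s")
  case True
  then show ?thesis using main_eq_pos[of s] main_eq_neg[of s] by auto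
next
  case False
  show ?thesis
  proof (intro conjI impI)
    assume sr: "s + r > 0"
    show "convex_on {- (s + r) / 2 <..< 0} (\<lambda>w. w * Phi S S1 r s w)"
    proof (rule main_neq[OF False])
      show "- (s + r) / 2 < 0" using sr by simp
      fix w assume w: "- (s + r) / 2 < w" "w < 0"
      have "(S2 (s+w) - S2 (r+w)) / ((s+w) - (r+w)) \<le> 0" using w by (intro quot2_pos) auto
      then show "0 \<le> w * ((S2 (s+w) - S2 (r+w)) / ((s+w) - (r+w)))"
        using w by (intro mult_nonpos_nonpos) auto
    qed
  next
    assume sr: "s + r < 0"
    show "convex_on {0 <..< - (s + r) / 2} (\<lambda>w. w * Phi S S1 r s w)"
    proof (rule main_neq[OF False])
      show "0 < - (s + r) / 2" using sr by simp
      fix w assume w: "0 < w" "w < - (s + r) / 2"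
      have "(S2 (s+w) - S2 (r+w)) / ((s+w) - (r+w)) \<ge> 0" using w by (intro quot2_neg) auto
      then show "0 \<le> w * ((S2 (s+w) - S2 (r+w)) / ((s+w) - (r+w)))"
        using w by (intro mult_nonneg_nonneg) auto
    qed
  qed
qed

end


lemma sinh_exp: "sinh (z::real) = (exp z - exp (-z)) / 2" by (simp add: sinh_def)
lemma cosh_exp: "cosh (z::real) = (exp z + exp (-z)) / 2" by (simp add: cosh_def)

lemma A_eq:
  fixes a b t :: real
  assumes "a \<noteq> b" "t \<noteq> 0"
  shows "(exp b powr t - exp a powr t) / (t * (b - a)) = exp (t * ((a+b)/2) + g ((b-a)/2 * t))"
proof -
  define m where "m = (a+b)/2"
  define d where "d = (b-a)/2"
  have dt: "d * t \<noteq> 0" using assms by (simp add: d_def)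
  have eg: "exp (g (d * t)) = sinh (d*t) / (d*t)"
    using sinh_div_pos[OF dt] dt by (simp add: g_def)
  have "t*b = t*m + d*t" by (simp add: m_def d_def field_simps)
  then have e1: "exp b powr t = exp (t*m) * exp (d*t)"
    by (simp add: powr_def exp_add[symmetric] mult.commute)
  have "t*a = t*m + -(d*t)" by (simp add: m_def d_def field_simps)
  then have e2: "exp a powr t = exp (t*m) * exp (-(d*t))"
    by (simp add: powr_def exp_add[symmetric] mult.commute)
  have "exp (t * m + g (d * t)) = exp (t*m) * (sinh (d*t) / (d*t))" by (simp add: exp_add eg)
  also have "\<dots> = (exp b powr t - exp a powr t) / (t * (b - a))"
    unfolding e1 e2 sinh_exp using dt assms by (simp add: d_def field_simps)
  finally show ?thesis by (simp add: m_def d_def)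
qed

lemma A_eq2:
  fixes a b t :: real
  assumes "a \<noteq> b" "t \<noteq> 0"
  shows "exp b powr t - exp a powr t = t * (b - a) * exp (t * ((a+b)/2) + g ((b-a)/2 * t))"
proof -
  have "t * (b - a) \<noteq> 0" using assms by simp
  then show ?thesis using A_eq[OF assms] by (simp add: field_simps)
qed

lemma ln_E:
  fixes a b p q :: real
  assumes ab: "a \<noteq> b"
  shows "ln (ext_mean p q (exp a) (exp b)) =
     (a+b)/2 + Phi (\<lambda>t. g ((b-a)/2 * t)) (\<lambda>t. (b-a)/2 * g1 ((b-a)/2 * t)) p q 0"
proof -
  define m where "m = (a+b)/2"
  define d where "d = (b-a)/2"
  define S where "S = (\<lambda>t. g (d * t))"
  define E where "E = (\<lambda>t. t * m + S t)"
  have d0: "d \<noteq> 0" using ab by (simp add: d_def)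
  have A: "\<And>t. t \<noteq> 0 \<Longrightarrow> exp b powr t - exp a powr t = t * (b - a) * exp (E t)"
    using A_eq2[OF ab] by (simp add: E_def S_def m_def d_def)
  have xy: "exp a \<noteq> exp b" using ab by simp
  have S0: "S 0 = 0" by (simp add: S_def g_def)
  have ba: "b - a \<noteq> 0" using ab by simp
  show ?thesis
  proof (cases "p \<noteq> 0 \<and> q \<noteq> 0 \<and> p \<noteq> q")
    case True
    have Aq: "exp b powr q - exp a powr q = q * (b - a) * exp (E q)" using A True by simp
    have Ap: "exp b powr p - exp a powr p = p * (b - a) * exp (E p)" using A True by simp
    have "(p / q) * ((exp b powr q - exp a powr q) / (exp b powr p - exp a powr p)) = exp (E q - E p)"
      unfolding Aq Ap using ba True by (simp add: exp_diff field_simps)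
    then have "ln (ext_mean p q (exp a) (exp b)) = (E q - E p) / (q - p)"
      using True xy by (simp add: ext_mean_def)
    also have "\<dots> = m + (S q - S p) / (q - p)" using True by (simp add: E_def field_simps)
    finally show ?thesis using True by (simp add: Phi_def m_def S_def d_def)
  next
    case F1: False
    show ?thesis
    proof (cases "p \<noteq> 0 \<and> q = 0")
      case True
      have Ap: "exp b powr p - exp a powr p = p * (b - a) * exp (E p)" using A True by simp
      have "(1 / p) * ((exp b powr p - exp a powr p) / (ln (exp b) - ln (exp a))) = exp (E p)"
        unfolding Ap using ba True by (simp add: field_simps)
      then have "ln (ext_mean p q (exp a) (exp b)) = E p / p"
        using True xy by (simp add: ext_mean_def)
      also have "\<dots> = m + (S q - S p) / (q - p)" using True S0 by (simp add: E_def field_simps)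
      finally show ?thesis using True by (simp add: Phi_def m_def S_def d_def)
    next
      case F2: False
      show ?thesis
      proof (cases "p = 0 \<and> q \<noteq> 0")
        case True
        have Aq: "exp b powr q - exp a powr q = q * (b - a) * exp (E q)" using A True by simp
        have "(1 / q) * ((exp b powr q - exp a powr q) / (ln (exp b) - ln (exp a))) = exp (E q)"
          unfolding Aq using ba True by (simp add: field_simps)
        then have "ln (ext_mean p q (exp a) (exp b)) = E q / q"
          using True xy by (simp add: ext_mean_def)
        also have "\<dots> = m + (S q - S p) / (q - p)" using True S0 by (simp add: E_def field_simps)
        finally show ?thesis using True by (simp add: Phi_def m_def S_def d_def)
      next
        case F3: False
        have pq: "p = q" using F1 F2 F3 by auto
        show ?thesis
        proof (cases "p = 0")
          case True
          then have "ln (ext_mean p q (exp a) (exp b)) = m"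
            using pq xy by (simp add: ext_mean_def m_def ln_sqrt mult_exp_exp)
          then show ?thesis using True pq by (simp add: Phi_def m_def g1_def)
        next
          case False
          define X where "X = exp (p * a)"
          define Y where "Y = exp (p * b)"
          have XY: "X \<noteq> Y" using False ab by (simp add: X_def Y_def)
          have pw: "exp a powr p = X" "exp b powr p = Y" by (simp_all add: X_def Y_def powr_def mult.commute)
          have pos: "(exp a powr X / exp b powr Y) > 0" by simp
          have "ln (ext_mean p q (exp a) (exp b)) = - 1 / p + (X * a - Y * b) / (X - Y)"
            using False pq xy pos unfolding ext_mean_def pw
            by (simp add: ln_mult ln_div)
          also have "\<dots> = m + d * g1 (d * p)"
          proof -
            have dp: "d * p \<noteq> 0" using False d0 by simp
            have ex: "X = exp (p*m) * exp (-(d*p))" "Y = exp (p*m) * exp (d*p)"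
              unfolding X_def Y_def m_def d_def exp_add[symmetric] by (simp_all add: field_simps)
            have sh: "sinh (d*p) \<noteq> 0" using dp by simp
            have "exp (-(d*p)) \<noteq> exp (d*p)" using dp by simp
            then have ne: "exp (-(d*p)) - exp (d*p) \<noteq> 0" by simp
            have "(X * a - Y * b) / (X - Y) = m + d * ((exp (d*p) + exp (-(d*p))) / (exp (d*p) - exp (-(d*p))))"
              unfolding ex using ne by (simp add: m_def d_def field_simps)
            also have "\<dots> = m + d * (cosh (d*p) / sinh (d*p))"
            proof -
              have ne2: "exp (d*p) - exp (-(d*p)) \<noteq> 0" using ne by simp
              show ?thesis using ne2 by (simp add: sinh_exp cosh_exp field_simps)
            qed
            moreover have "d * g1 (d*p) = d * (cosh (d*p) / sinh (d*p)) - 1 / p"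
              using dp d0 by (simp add: g1_def right_diff_distrib)
            ultimately show ?thesis by linarith
          qed
          finally show ?thesis using pq by (simp add: Phi_def m_def d_def)
        qed
      qed
    qed
  qed
qed


lemma ln_E_all:
  fixes a b p q :: real
  shows "ln (ext_mean p q (exp a) (exp b)) =
     (a+b)/2 + Phi (\<lambda>t. g ((b-a)/2 * t)) (\<lambda>t. (b-a)/2 * g1 ((b-a)/2 * t)) p q 0"
proof (cases "a = b")
  case True
  then show ?thesis by (simp add: ext_mean_def Phi_def g_def g1_def)
qed (rule ln_E)

lemma linear_convex: "convex_on {lo<..<hi} (\<lambda>w::real. w * m)"
proof -
  have a: "\<And>w. ((\<lambda>w::real. w * m) has_real_derivative m) (at w)"
    by (auto intro!: derivative_eq_intros)
  have b: "\<And>w. ((\<lambda>_::real. m) has_real_derivative 0) (at w)"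
    by (auto intro!: derivative_eq_intros)
  show ?thesis by (rule convex_from_f2[OF a b]) simp
qed

theorem theorem5:
  fixes x y r s :: real
  assumes "x > 0" and "y > 0"
  shows "(s + r > 0 \<longrightarrow>
            convex_on {- (s + r) / 2 <..< 0} (\<lambda>w. w * ln (ext_mean (r + w) (s + w) x y)))
       \<and> (s + r < 0 \<longrightarrow>
            convex_on {0 <..< - (s + r) / 2} (\<lambda>w. w * ln (ext_mean (r + w) (s + w) x y)))"
proof -
  define a where "a = ln x"
  define b where "b = ln y"
  define d where "d = (b - a) / 2"
  define m where "m = (a + b) / 2"
  define S where "S = (\<lambda>t. g (d * t))"
  define S1 where "S1 = (\<lambda>t. d * g1 (d * t))"
  define S2 where "S2 = (\<lambda>t. d^2 * g2 (d * t))"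
  have x: "x = exp a" and y: "y = exp b" using assms by (simp_all add: a_def b_def)
  have feq: "(\<lambda>w. w * ln (ext_mean (r + w) (s + w) x y)) = (\<lambda>w. w * m + w * Phi S S1 r s w)"
  proof
    fix w
    have "ln (ext_mean (r + w) (s + w) x y) = m + Phi S S1 (r + w) (s + w) 0"
      unfolding x y ln_E_all by (simp add: m_def S_def S1_def d_def)
    also have "Phi S S1 (r + w) (s + w) 0 = Phi S S1 r s w" by (simp add: Phi_def)
    finally show "w * ln (ext_mean (r + w) (s + w) x y) = w * m + w * Phi S S1 r s w"
      by (simp add: algebra_simps)
  qed
  have d1: "\<And>t. (S has_real_derivative S1 t) (at t)"
  proof -
    fix t
    have "((\<lambda>t. g (d*t)) has_real_derivative g1 (d*t) * d) (at t)"
      by (rule DERIV_chain2[OF g_deriv]) (auto intro!: derivative_eq_intros)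
    then show "(S has_real_derivative S1 t) (at t)" by (simp add: S_def S1_def mult.commute)
  qed
  have d2: "\<And>t. (S1 has_real_derivative S2 t) (at t)"
  proof -
    fix t
    have "((\<lambda>t. g1 (d*t)) has_real_derivative g2 (d*t) * d) (at t)"
      by (rule DERIV_chain2[OF g1_deriv]) (auto intro!: derivative_eq_intros)
    then have "((\<lambda>t. d * g1 (d*t)) has_real_derivative d * (g2 (d*t) * d)) (at t)"
      by (rule DERIV_cmult)
    then show "(S1 has_real_derivative S2 t) (at t)" by (simp add: S1_def S2_def power2_eq_square mult_ac)
  qed
  have ev: "\<And>t. S2 (-t) = S2 t"
    unfolding S2_def using g2_even by (metis mult_minus_right)
  have nn: "\<And>t. S2 t \<ge> 0" unfolding S2_def using g2_nonneg by simp
  have anti: "\<And>u v. 0 \<le> u \<Longrightarrow> u \<le> v \<Longrightarrow> S2 v \<le> S2 u"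
  proof -
    fix u v :: real assume uv: "0 \<le> u" "u \<le> v"
    have "g2 (d * v) \<le> g2 (d * u)"
    proof (cases "d \<ge> 0")
      case True then show ?thesis using uv by (intro g2_antitone) (auto intro: mult_left_mono)
    next
      case False
      have "g2 (-d * v) \<le> g2 (-d * u)" using uv False by (intro g2_antitone) (auto intro: mult_left_mono simp: mult_nonpos_nonneg)
      then show ?thesis by (metis g2_even mult_minus_left)
    qed
    then show "S2 v \<le> S2 u" unfolding S2_def by (intro mult_left_mono) auto
  qed
  note mn = main[OF d1 d2 ev nn anti, of s r]
  show ?thesis unfolding feq
    using mn linear_convex by (auto intro!: convex_on_add)
qed

end
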